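(* Let $T>0$, $\mathbb{U}\subset\mathbb{R}^m$ compact non-empty, and $f:[0,T]\times\mathbb{R}^n\times\mathbb{U}\to\mathbb{R}^n$ continuous and Lipschitz in $x$ uniformly in $(s,u)$. Let $\overline{v}\in C([0,T]\times\mathbb{R}^n;\mathbb{R})$ be a viscosity supersolution of $-v_t+H(t,x,\nabla v)=0$ on $\Omega=\{(t,x)\in(0,T)\times\mathbb{R}^n\,|\,\overline{v}(t,x)<0\}$. Then $\overline{v}^\times(t,x):=\min\{\overline{v}(t,x),0\}$ belongs to $C([0,T]\times\mathbb{R}^n;\mathbb{R})$, is a viscosity supersolution of $-v_t+H(t,x,\nabla v)=0$ on $\Omega=(0,T)\times\mathbb{R}^n$, and satisfies $\overline{v}^\times(T,x)=\min\{\overline{v}(T,x),0\}$ for all $x\in\mathbb{R}^n$.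
   Context: The Hamiltonian is $H(t,x,p)=\max_{u\in\mathbb{U}}\langle -p,f(t,x,u)\rangle$. For an open set $\Omega\subseteq(0,T)\times\mathbb{R}^n$, a function $v\in C([0,T]\times\mathbb{R}^n;\mathbb{R})$ is a viscosity supersolution (resp. subsolution) of $-v_t+H(t,x,\nabla v)=0$ on $\Omega$ if for every $\xi\in C^1(\Omega;\mathbb{R})$ such that $v-\xi$ attains a local minimum (resp. local maximum) at $(t_0,x_0)\in\Omega$, one has $-\xi_t(t_0,x_0)+H(t_0,x_0,\nabla\xi(t_0,x_0))\ge 0$ (resp. $\le 0$). *)

theory Defs
  imports "HOL-Analysis.Analysis"
begin

text \<open>Hamiltonian H(t,x,p) = max over u in U of <-p, f(t,x,u)>.
  For compact nonempty U and continuous f the supremum is attained, i.e. is the maximum.\<close>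
definition hamiltonian ::
  "(real \<Rightarrow> real^'n \<Rightarrow> real^'m \<Rightarrow> real^'n) \<Rightarrow> (real^'m) set \<Rightarrow> real \<Rightarrow> real^'n \<Rightarrow> real^'n \<Rightarrow> real" where
  "hamiltonian f U t x p = (SUP u\<in>U. inner (- p) (f t x u))"

definition C1_on ::
  "(real \<times> (real^'n)) set \<Rightarrow> (real \<times> (real^'n) \<Rightarrow> real) \<Rightarrow> (real \<times> (real^'n) \<Rightarrow> (real \<times> (real^'n)) \<Rightarrow>\<^sub>L real) \<Rightarrow> bool" where
  "C1_on \<Omega> \<xi> D \<longleftrightarrow> (\<forall>z\<in>\<Omega>. (\<xi> has_derivative blinfun_apply (D z)) (at z)) \<and> continuous_on \<Omega> D"

definition time_deriv :: "((real \<times> (real^'n)) \<Rightarrow>\<^sub>L real) \<Rightarrow> real" where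
  "time_deriv L = blinfun_apply L (1, 0)"

definition grad :: "((real \<times> (real^'n)) \<Rightarrow>\<^sub>L real) \<Rightarrow> real^'n" where
  "grad L = (\<chi> i. blinfun_apply L (0, axis i 1))"

definition visc_supersol ::
  "(real \<times> (real^'n)) set \<Rightarrow> (real \<Rightarrow> real^'n \<Rightarrow> real^'m \<Rightarrow> real^'n) \<Rightarrow> (real^'m) set \<Rightarrow> (real \<Rightarrow> real^'n \<Rightarrow> real) \<Rightarrow> bool" where
  "visc_supersol \<Omega> f U v \<longleftrightarrow>
     (\<forall>\<xi> D t0 x0. C1_on \<Omega> \<xi> D \<longrightarrow> (t0, x0) \<in> \<Omega> \<longrightarrow>
        (\<exists>e>0. \<forall>t x. (t, x) \<in> \<Omega> \<inter> ball (t0, x0) e \<longrightarrow>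
              v t x - \<xi> (t, x) \<ge> v t0 x0 - \<xi> (t0, x0)) \<longrightarrow>
        - time_deriv (D (t0, x0)) + hamiltonian f U t0 x0 (grad (D (t0, x0))) \<ge> 0)"

end

theory Submission
  imports Defs
begin

theorem lemma5:
  fixes T :: real
    and U :: "(real^'m) set"
    and f :: "real \<Rightarrow> real^'n \<Rightarrow> real^'m \<Rightarrow> real^'n"
    and vbar :: "real \<Rightarrow> real^'n \<Rightarrow> real"
  assumes "T > 0"
    and "compact U" and "U \<noteq> {}"
    and "continuous_on ({0..T} \<times> UNIV \<times> U) (\<lambda>(s, x, u). f s x u)"
    and "\<exists>L. \<forall>s\<in>{0..T}. \<forall>u\<in>U. \<forall>x y. norm (f s x u - f s y u) \<le> L * norm (x - y)"
    and "continuous_on ({0..T} \<times> UNIV) (\<lambda>(t, x). vbar t x)"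
    and "visc_supersol {(t, x). t \<in> {0<..<T} \<and> vbar t x < 0} f U vbar"
  shows "continuous_on ({0..T} \<times> UNIV) (\<lambda>(t, x). min (vbar t x) 0)
     \<and> visc_supersol ({0<..<T} \<times> UNIV) f U (\<lambda>t x. min (vbar t x) 0)
     \<and> (\<forall>x. (\<lambda>t x. min (vbar t x) 0) T x = min (vbar T x) 0)"
proof -
  have c: "continuous_on ({0..T} \<times> UNIV) (\<lambda>(t, x). min (vbar t x) 0)"
  proof -
    have "continuous_on ({0..T} \<times> UNIV) (\<lambda>z. min ((\<lambda>(t, x). vbar t x) z) 0)"
      by (intro continuous_on_min assms(6) continuous_on_const)
    then show ?thesis by (simp add: case_prod_beta)
  qed
  define \<Omega> where "\<Omega> = {(t, x). t \<in> {0<..<T} \<and> vbar t x < 0}"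
  define \<Omega>' where "\<Omega>' = ({0<..<T} \<times> (UNIV :: (real^'n) set))"
  have sub: "\<Omega> \<subseteq> \<Omega>'" unfolding \<Omega>_def \<Omega>'_def by auto
  have vs: "visc_supersol \<Omega>' f U (\<lambda>t x. min (vbar t x) 0)"
    unfolding visc_supersol_def
  proof (intro allI impI)
    fix \<xi> D t0 x0
    assume C1: "C1_on \<Omega>' \<xi> D" and z0: "(t0, x0) \<in> \<Omega>'"
      and mn: "\<exists>e>0. \<forall>t x. (t, x) \<in> \<Omega>' \<inter> ball (t0, x0) e \<longrightarrow>
              min (vbar t x) 0 - \<xi> (t, x) \<ge> min (vbar t0 x0) 0 - \<xi> (t0, x0)"
    then obtain e where e: "e > 0" and
      emin: "\<And>t x. (t, x) \<in> \<Omega>' \<inter> ball (t0, x0) e \<Longrightarrow>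
              min (vbar t x) 0 - \<xi> (t, x) \<ge> min (vbar t0 x0) 0 - \<xi> (t0, x0)" by blast
    show "- time_deriv (D (t0, x0)) + hamiltonian f U t0 x0 (grad (D (t0, x0))) \<ge> 0"
    proof (cases "vbar t0 x0 < 0")
      case True
      have C1': "C1_on \<Omega> \<xi> D" using C1 sub unfolding C1_on_def
        by (meson continuous_on_subset subsetD)
      have "(t0, x0) \<in> \<Omega>" using True z0 unfolding \<Omega>_def \<Omega>'_def by auto
      moreover have "\<exists>e>0. \<forall>t x. (t, x) \<in> \<Omega> \<inter> ball (t0, x0) e \<longrightarrow>
              vbar t x - \<xi> (t, x) \<ge> vbar t0 x0 - \<xi> (t0, x0)"
      proof (intro exI[of _ e] conjI allI impI e)
        fix t x assume "(t, x) \<in> \<Omega> \<inter> ball (t0, x0) e"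
        then have "(t, x) \<in> \<Omega>' \<inter> ball (t0, x0) e" using sub by auto
        from emin[OF this] True show "vbar t x - \<xi> (t, x) \<ge> vbar t0 x0 - \<xi> (t0, x0)"
          by linarith
      qed
      ultimately show ?thesis using assms(7) C1' unfolding visc_supersol_def \<Omega>_def by blast
    next
      case False
      let ?S = "\<Omega>' \<inter> ball (t0, x0) e"
      have op: "open ?S" unfolding \<Omega>'_def by (intro open_Int open_Times) auto
      have inS: "(t0, x0) \<in> ?S" using z0 e by auto
      have der: "(\<xi> has_derivative blinfun_apply (D (t0, x0))) (at (t0, x0))"
        using C1 z0 unfolding C1_on_def by blast
      have "\<forall>y\<in>?S. \<xi> y \<le> \<xi> (t0, x0)"
      proof
        fix y assume y: "y \<in> ?S"
        obtain t x where yy: "y = (t, x)" by fastforce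
        from emin[of t x] y yy False show "\<xi> y \<le> \<xi> (t0, x0)" by auto
      qed
      then have z: "blinfun_apply (D (t0, x0)) = (\<lambda>v. 0)"
        using differential_zero_maxmin[OF inS op der] by blast
      have td: "time_deriv (D (t0, x0)) = 0" unfolding time_deriv_def z by simp
      have gd: "grad (D (t0, x0)) = 0" unfolding grad_def z by (simp add: vec_eq_iff)
      have "hamiltonian f U t0 x0 0 = 0" unfolding hamiltonian_def using assms(3) by simp
      then show ?thesis using td gd by simp
    qed
  qed
  show ?thesis using c vs unfolding \<Omega>'_def by simp
qed

end
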